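(* Let $F$ be a field of characteristic not $2$, let $a\in F^*$ be a non-square, and let $L=F(\sqrt{a})$. Then $F^{(3)}\subset L^{(3)}$.
   Context: All fields are taken inside a fixed quadratic closure $F_q$ of $F$. For a field $K$ of characteristic not $2$, define $K^{(1)}=K$ and, for $n\ge 1$, $K^{(n+1)}$ is the compositum of all quadratic extensions of $K^{(n)}$ which are Galois over $K$. *)

theory Defs
  imports "HOL-Computational_Algebra.Polynomial"
begin

text \<open>The ambient type 'a plays the role of the fixed quadratic closure F_q.
 Subfields of it are represented as sets.\<close>

definition subfield :: "'a::field set \<Rightarrow> bool" where
  "subfield K \<longleftrightarrow> 0 \<in> K \<and> 1 \<in> K \<and>
     (\<forall>x\<in>K. \<forall>y\<in>K. x + y \<in> K \<and> x - y \<in> K \<and> x * y \<in> K) \<and>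
     (\<forall>x\<in>K. inverse x \<in> K)"

definition gen_field :: "'a::field set \<Rightarrow> 'a set" where
  "gen_field S = \<Inter>{K. subfield K \<and> S \<subseteq> K}"

definition is_quadratic_closure_of :: "'a::field set \<Rightarrow> bool" where
  "is_quadratic_closure_of F \<longleftrightarrow> (\<forall>x::'a. \<exists>y. y * y = x) \<and>
     (\<forall>K. subfield K \<and> F \<subseteq> K \<and> (\<forall>x\<in>K. \<exists>y\<in>K. y * y = x) \<longrightarrow> K = UNIV)"

definition ext_dim :: "'a::field set \<Rightarrow> 'a set \<Rightarrow> nat \<Rightarrow> bool" where
  "ext_dim K E n \<longleftrightarrow> (\<exists>b::'a list. length b = n \<and> set b \<subseteq> E \<and>
     (\<forall>x\<in>E. \<exists>!c::nat \<Rightarrow> 'a. (\<forall>i<n. c i \<in> K) \<and> (\<forall>i\<ge>n. c i = 0) \<and>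
        x = (\<Sum>i<n. c i * b ! i)))"

definition quadratic_ext :: "'a::field set \<Rightarrow> 'a set \<Rightarrow> bool" where
  "quadratic_ext K E \<longleftrightarrow> subfield K \<and> subfield E \<and> K \<subseteq> E \<and> ext_dim K E 2"

definition poly_over :: "'a::field set \<Rightarrow> 'a poly \<Rightarrow> bool" where
  "poly_over K p \<longleftrightarrow> (\<forall>i. coeff p i \<in> K)"

definition irreducible_over :: "'a::field set \<Rightarrow> 'a poly \<Rightarrow> bool" where
  "irreducible_over K p \<longleftrightarrow> poly_over K p \<and> degree p \<ge> 1 \<and>
     \<not> (\<exists>q r. poly_over K q \<and> poly_over K r \<and> degree q \<ge> 1 \<and> degree r \<ge> 1 \<and> p = q * r)"

text \<open>E is a Galois (algebraic, normal and separable) extension of K: every element of E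
 is a root of an irreducible polynomial over K which splits over E into distinct linear
 factors.\<close>
definition galois_over :: "'a::field set \<Rightarrow> 'a set \<Rightarrow> bool" where
  "galois_over K E \<longleftrightarrow> subfield K \<and> subfield E \<and> K \<subseteq> E \<and>
     (\<forall>x\<in>E. \<exists>p. irreducible_over K p \<and> poly p x = 0 \<and>
        (\<exists>rs. distinct rs \<and> set rs \<subseteq> E \<and>
              p = smult (lead_coeff p) (\<Prod>r\<leftarrow>rs. [:- r, 1:])))"

definition quad_step :: "'a::field set \<Rightarrow> 'a set \<Rightarrow> 'a set" where
  "quad_step K M = gen_field (M \<union> \<Union>{E. quadratic_ext M E \<and> galois_over K E})"

text \<open>kup K n = K^{(n)} for n \<ge> 1 (the value at 0 is irrelevant).\<close>
fun kup :: "'a::field set \<Rightarrow> nat \<Rightarrow> 'a set" where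
  "kup K 0 = K"
| "kup K (Suc 0) = K"
| "kup K (Suc (Suc n)) = quad_step K (kup K (Suc n))"

end

theory Submission
  imports Defs "HOL-Computational_Algebra.Polynomial_Factorial"
begin


lemma subfieldD:
  assumes "subfield K"
  shows "0 \<in> K" "1 \<in> K" "x \<in> K \<Longrightarrow> y \<in> K \<Longrightarrow> x + y \<in> K"
    "x \<in> K \<Longrightarrow> y \<in> K \<Longrightarrow> x - y \<in> K" "x \<in> K \<Longrightarrow> y \<in> K \<Longrightarrow> x * y \<in> K"
    "x \<in> K \<Longrightarrow> inverse x \<in> K"
  using assms unfolding subfield_def by auto

lemma subfield_uminus: "subfield K \<Longrightarrow> x \<in> K \<Longrightarrow> - x \<in> K"
  using subfieldD(1)[of K] subfieldD(4)[where K=K and x=0 and y=x] by simp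

lemma subfield_divide: "subfield K \<Longrightarrow> x \<in> K \<Longrightarrow> y \<in> K \<Longrightarrow> x / y \<in> K"
  by (simp add: divide_inverse subfieldD)

lemma subfield_UNIV: "subfield (UNIV :: 'a::field set)"
  by (simp add: subfield_def)

lemma subfield_gen_field: "subfield (gen_field S)"
  unfolding gen_field_def subfield_def by auto

lemma gen_field_sub: "S \<subseteq> gen_field S"
  unfolding gen_field_def by auto

lemma gen_field_least: "subfield K \<Longrightarrow> S \<subseteq> K \<Longrightarrow> gen_field S \<subseteq> K"
  unfolding gen_field_def by auto

lemma gen_field_mono: "S \<subseteq> T \<Longrightarrow> gen_field S \<subseteq> gen_field T"
  by (meson gen_field_least gen_field_sub order_trans subfield_gen_field)

lemma gen_field_id: "subfield K \<Longrightarrow> gen_field K = K"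
  by (simp add: gen_field_least gen_field_sub subset_antisym)

lemma gen_field_in: "subfield K \<Longrightarrow> z \<in> K \<Longrightarrow> gen_field (K \<union> {z}) = K"
  by (metis gen_field_id insert_absorb insert_is_Un sup_commute)

lemma gen_field_nest: "gen_field (gen_field S \<union> T) = gen_field (S \<union> T)"
proof
  show "gen_field (gen_field S \<union> T) \<subseteq> gen_field (S \<union> T)"
    by (rule gen_field_least[OF subfield_gen_field])
       (metis Un_least Un_upper1 Un_upper2 gen_field_mono gen_field_sub order_trans)
  show "gen_field (S \<union> T) \<subseteq> gen_field (gen_field S \<union> T)"
    by (rule gen_field_mono) (use gen_field_sub in blast)
qed

definition homfix :: "'a::field set \<Rightarrow> 'a set \<Rightarrow> 'a set \<Rightarrow> ('a \<Rightarrow> 'a) \<Rightarrow> bool" where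
  "homfix K A N \<sigma> \<longleftrightarrow> (\<forall>x\<in>A. \<sigma> x \<in> N) \<and> (\<forall>k\<in>K. \<sigma> k = k) \<and> \<sigma> 1 = 1 \<and>
     (\<forall>x\<in>A. \<forall>y\<in>A. \<sigma> (x + y) = \<sigma> x + \<sigma> y \<and> \<sigma> (x * y) = \<sigma> x * \<sigma> y)"

context
  fixes K A N :: "'a::field set" and \<sigma> :: "'a \<Rightarrow> 'a"
  assumes h: "homfix K A N \<sigma>" and sA: "subfield A"
begin

lemma hf_in: "x \<in> A \<Longrightarrow> \<sigma> x \<in> N" using h unfolding homfix_def by auto
lemma hf_fix: "k \<in> K \<Longrightarrow> \<sigma> k = k" using h unfolding homfix_def by auto
lemma hf_one: "\<sigma> 1 = 1" using h unfolding homfix_def by auto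
lemma hf_add: "x \<in> A \<Longrightarrow> y \<in> A \<Longrightarrow> \<sigma> (x + y) = \<sigma> x + \<sigma> y" using h unfolding homfix_def by auto
lemma hf_mult: "x \<in> A \<Longrightarrow> y \<in> A \<Longrightarrow> \<sigma> (x * y) = \<sigma> x * \<sigma> y" using h unfolding homfix_def by auto
lemma hf_zero: "\<sigma> 0 = 0"
proof -
  have "\<sigma> (0 + 0) = \<sigma> 0 + \<sigma> 0" using hf_add[of 0 0] subfieldD(1)[OF sA] by blast
  then show ?thesis by (metis add.right_neutral add_left_cancel)
qed
lemma hf_uminus: "x \<in> A \<Longrightarrow> \<sigma> (- x) = - \<sigma> x"
proof -
  assume x: "x \<in> A"
  have "\<sigma> (x + - x) = \<sigma> x + \<sigma> (- x)" using hf_add[of x "-x"] subfield_uminus[OF sA x] x by blast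
  then have "\<sigma> x + \<sigma> (- x) = 0" using hf_zero by simp
  then show ?thesis by (metis add.commute eq_neg_iff_add_eq_0)
qed
lemma hf_diff: "x \<in> A \<Longrightarrow> y \<in> A \<Longrightarrow> \<sigma> (x - y) = \<sigma> x - \<sigma> y"
  using hf_add[of x "-y"] hf_uminus[of y] subfield_uminus[OF sA] by simp
lemma hf_nz: "x \<in> A \<Longrightarrow> x \<noteq> 0 \<Longrightarrow> \<sigma> x \<noteq> 0"
  using hf_mult[of x "inverse x"] hf_one subfieldD(6)[OF sA] by auto
lemma hf_inj: "x \<in> A \<Longrightarrow> y \<in> A \<Longrightarrow> \<sigma> x = \<sigma> y \<Longrightarrow> x = y"
  using hf_diff[of x y] hf_nz[of "x - y"] subfieldD(4)[OF sA] by auto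
lemma hf_inverse: "x \<in> A \<Longrightarrow> \<sigma> (inverse x) = inverse (\<sigma> x)"
proof (cases "x = 0")
  case True then show ?thesis using hf_zero by simp
next
  case False
  assume x: "x \<in> A"
  have "\<sigma> x * \<sigma> (inverse x) = 1"
    using hf_mult[of x "inverse x"] hf_one subfieldD(6)[OF sA] x False by auto
  then show ?thesis by (metis inverse_unique)
qed
lemma hf_restrict: "B \<subseteq> A \<Longrightarrow> homfix K B N \<sigma>"
  using h unfolding homfix_def by blast
lemma hf_codom: "N \<subseteq> N' \<Longrightarrow> homfix K A N' \<sigma>"
  using h unfolding homfix_def by auto

end

lemma homfix_id: "A \<subseteq> N \<Longrightarrow> homfix K A N id"
  unfolding homfix_def by auto



definition qset :: "'a::field set \<Rightarrow> 'a \<Rightarrow> 'a set" where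
  "qset A z = {a + b * z | a b. a \<in> A \<and> b \<in> A}"

lemma quad_unique:
  assumes A: "subfield A" and z: "z \<notin> A" and ins: "a \<in> A" "b \<in> A" "a' \<in> A" "b' \<in> A"
    and eq: "a + b * z = a' + b' * z"
  shows "a = a' \<and> b = b'"
proof (cases "b = b'")
  case True then show ?thesis using eq by simp
next
  case False
  have "(b - b') * z = a' - a" using eq by (simp add: algebra_simps)
  then have "z = (a' - a) / (b - b')" using False by (simp add: field_simps)
  then have "z \<in> A" using A ins by (simp add: subfield_divide subfieldD)
  then show ?thesis using z by simp
qed

lemma sq_root_cases: "(z::'a::field) * z = q * q \<Longrightarrow> z = q \<or> z = - q"
proof -
  assume "z * z = q * q"
  then have "(z - q) * (z + q) = 0" by (simp add: algebra_simps)
  then show ?thesis by (auto simp: eq_neg_iff_add_eq_0)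
qed

lemma qset_subfield:
  assumes A: "subfield A" and e: "z * z \<in> A" and z: "z \<notin> A"
  shows "subfield (qset A z)"
proof -
  note sf = subfieldD[OF A]
  let ?e = "z * z"
  have mem: "a \<in> A \<Longrightarrow> b \<in> A \<Longrightarrow> a + b * z \<in> qset A z" for a b
    unfolding qset_def by blast
  have "0 \<in> qset A z" using mem[of 0 0] sf by simp
  moreover have "1 \<in> qset A z" using mem[of 1 0] sf by simp
  moreover have "x + y \<in> qset A z \<and> x - y \<in> qset A z \<and> x * y \<in> qset A z"
    if xq: "x \<in> qset A z" and yq: "y \<in> qset A z" for x y
  proof -
    obtain a b where x: "x = a + b * z" "a \<in> A" "b \<in> A" using xq unfolding qset_def by blast
    obtain c d where y: "y = c + d * z" "c \<in> A" "d \<in> A" using yq unfolding qset_def by blast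
    have "x + y = (a + c) + (b + d) * z" using x y by (simp add: algebra_simps)
    moreover have "x - y = (a - c) + (b - d) * z" using x y by (simp add: algebra_simps)
    moreover have "x * y = (a * c + b * d * ?e) + (a * d + b * c) * z" using x y by (simp add: algebra_simps)
    ultimately show ?thesis using mem[of "a+c" "b+d"] mem[of "a-c" "b-d"]
        mem[of "a * c + b * d * ?e" "a * d + b * c"] x y e sf by metis
  qed
  moreover have "inverse x \<in> qset A z" if xq: "x \<in> qset A z" for x
  proof (cases "x = 0")
    case True then show ?thesis using mem[of 0 0] sf by simp
  next
    case False
    obtain a b where x: "x = a + b * z" "a \<in> A" "b \<in> A" using xq unfolding qset_def by blast
    define n where "n = a * a - b * b * ?e"
    have n: "n \<noteq> 0"
    proof
      assume n0: "n = 0"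
      show False
      proof (cases "b = 0")
        case True then show False using n0 x False by (simp add: n_def)
      next
        case bn: False
        have "z * z = (a / b) * (a / b)" using n0 bn by (simp add: n_def field_simps)
        then have "z = a / b \<or> z = - (a / b)" by (rule sq_root_cases)
        then show False using z x subfield_divide[OF A] subfield_uminus[OF A] by metis
      qed
    qed
    have xn: "x * (a - b * z) = n" by (simp add: n_def x algebra_simps)
    have "(a / n) + (- b / n) * z = (a - b * z) / n" by (simp add: diff_divide_distrib)
    then have "x * ((a / n) + (- b / n) * z) = 1"
      using n xn by simp
    then have "inverse x = (a / n) + (- b / n) * z" by (metis inverse_unique)
    moreover have "n \<in> A" using x e by (simp add: n_def sf)
    moreover have "a / n \<in> A" "- b / n \<in> A" using x \<open>n \<in> A\<close> subfield_divide[OF A] subfield_uminus[OF A] by auto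
    ultimately show ?thesis using mem by metis
  qed
  ultimately show ?thesis unfolding subfield_def by blast
qed

lemma quad_gen:
  assumes A: "subfield A" and e: "z * z \<in> A" and z: "z \<notin> A"
  shows "gen_field (A \<union> {z}) = qset A z"
proof
  have "A \<subseteq> qset A z" unfolding qset_def using subfieldD(1)[OF A] by force
  moreover have "z \<in> qset A z" unfolding qset_def using subfieldD(1,2)[OF A] by force
  ultimately show "gen_field (A \<union> {z}) \<subseteq> qset A z"
    by (intro gen_field_least qset_subfield assms) auto
  show "qset A z \<subseteq> gen_field (A \<union> {z})"
  proof
    fix x assume "x \<in> qset A z"
    then obtain a b where x: "x = a + b * z" "a \<in> A" "b \<in> A" unfolding qset_def by blast
    have G: "subfield (gen_field (A \<union> {z}))" by (rule subfield_gen_field)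
    have "A \<union> {z} \<subseteq> gen_field (A \<union> {z})" by (rule gen_field_sub)
    then have "a \<in> gen_field (A \<union> {z})" "b \<in> gen_field (A \<union> {z})" "z \<in> gen_field (A \<union> {z})"
      using x by auto
    then show "x \<in> gen_field (A \<union> {z})" using x subfieldD(3,5)[OF G] by metis
  qed
qed



lemma ext_hom:
  assumes A: "subfield A" and N: "subfield N" and KA: "K \<subseteq> A" and h: "homfix K A N \<sigma>"
    and e: "z * z \<in> A" and z: "z \<notin> A" and z': "z' \<in> N" and sq: "z' * z' = \<sigma> (z * z)"
  shows "\<exists>\<sigma>'. homfix K (gen_field (A \<union> {z})) N \<sigma>' \<and> (\<forall>x\<in>A. \<sigma>' x = \<sigma> x) \<and> \<sigma>' z = z'"
proof -
  note sf = subfieldD[OF A]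
  note nf = subfieldD[OF N]
  define co where "co x = (SOME p. fst p \<in> A \<and> snd p \<in> A \<and> x = fst p + snd p * z)" for x
  have co: "co (a + b * z) = (a, b)" if ab: "a \<in> A" "b \<in> A" for a b
  proof -
    have "\<exists>p. fst p \<in> A \<and> snd p \<in> A \<and> a + b * z = fst p + snd p * z" using ab by (intro exI[of _ "(a,b)"]) auto
    then have p: "fst (co (a + b * z)) \<in> A \<and> snd (co (a + b * z)) \<in> A \<and> a + b * z = fst (co (a + b * z)) + snd (co (a + b * z)) * z"
      unfolding co_def by (rule someI_ex)
    then have "a = fst (co (a + b * z)) \<and> b = snd (co (a + b * z))"
      using quad_unique[OF A z] ab by blast
    then show ?thesis by (metis prod.collapse)
  qed
  define \<tau> where "\<tau> x = \<sigma> (fst (co x)) + \<sigma> (snd (co x)) * z'" for x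
  have \<tau>: "\<tau> (a + b * z) = \<sigma> a + \<sigma> b * z'" if "a \<in> A" "b \<in> A" for a b
    using co[OF that] by (simp add: \<tau>_def)
  have G: "gen_field (A \<union> {z}) = qset A z" by (rule quad_gen[OF A e z])
  have \<tau>A: "\<tau> x = \<sigma> x" if "x \<in> A" for x
    using \<tau>[of x 0] that sf(1) hf_zero[OF h A] by simp
  have \<tau>z: "\<tau> z = z'"
    using \<tau>[of 0 1] sf(1,2) hf_zero[OF h A] hf_one[OF h A] by simp
  have "homfix K (qset A z) N \<tau>"
    unfolding homfix_def
  proof (intro conjI ballI)
    fix x assume "x \<in> qset A z"
    then obtain a b where x: "x = a + b * z" "a \<in> A" "b \<in> A" unfolding qset_def by blast
    show "\<tau> x \<in> N" using \<tau> x hf_in[OF h A] z' nf by simp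
  next
    fix k assume "k \<in> K" then show "\<tau> k = k" using \<tau>A KA hf_fix[OF h A] by auto
  next
    show "\<tau> 1 = 1" using \<tau>A sf(2) hf_one[OF h A] by simp
  next
    fix x y assume "x \<in> qset A z" "y \<in> qset A z"
    then obtain a b c d where x: "x = a + b * z" "a \<in> A" "b \<in> A"
      and y: "y = c + d * z" "c \<in> A" "d \<in> A" unfolding qset_def by blast
    have "x + y = (a + c) + (b + d) * z" using x y by (simp add: algebra_simps)
    then have "\<tau> (x + y) = \<tau> ((a + c) + (b + d) * z)" by (rule arg_cong)
    also have "\<dots> = \<sigma> (a + c) + \<sigma> (b + d) * z'" using x y sf by (intro \<tau>) auto
    also have "\<dots> = \<tau> x + \<tau> y" using \<tau> x y hf_add[OF h A] by (simp add: algebra_simps)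
    finally show "\<tau> (x + y) = \<tau> x + \<tau> y" .
    have "x * y = (a * c + b * d * (z * z)) + (a * d + b * c) * z" using x y by (simp add: algebra_simps)
    then have "\<tau> (x * y) = \<tau> ((a * c + b * d * (z * z)) + (a * d + b * c) * z)" by (rule arg_cong)
    also have "\<dots> = \<sigma> (a * c + b * d * (z * z)) + \<sigma> (a * d + b * c) * z'"
      using x y sf e by (intro \<tau>) auto
    also have "\<dots> = (\<sigma> a * \<sigma> c + \<sigma> b * \<sigma> d * (z' * z')) + (\<sigma> a * \<sigma> d + \<sigma> b * \<sigma> c) * z'"
      using x y e sf hf_add[OF h A] hf_mult[OF h A] sq by simp
    also have "\<dots> = \<tau> x * \<tau> y" using \<tau> x y by (simp add: algebra_simps)
    finally show "\<tau> (x * y) = \<tau> x * \<tau> y" .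
  qed
  then show ?thesis using G \<tau>A \<tau>z by auto
qed



definition tw :: "'a::field set \<Rightarrow> 'a list \<Rightarrow> nat \<Rightarrow> 'a set" where
  "tw K zs i = gen_field (K \<union> set (take i zs))"

definition good :: "'a::field set \<Rightarrow> 'a list \<Rightarrow> bool" where
  "good K zs \<longleftrightarrow> (\<forall>i<length zs. zs ! i * zs ! i \<in> tw K zs i \<and>
     (\<forall>\<sigma>. homfix K (tw K zs i) (tw K zs (length zs)) \<sigma> \<longrightarrow>
        (\<exists>z'\<in>tw K zs (length zs). z' * z' = \<sigma> (zs ! i * zs ! i))))"

lemma tw_step: "i < length zs \<Longrightarrow> tw K zs (Suc i) = gen_field (tw K zs i \<union> {zs ! i})"
proof -
  assume i: "i < length zs"
  have "K \<union> set (take (Suc i) zs) = (K \<union> set (take i zs)) \<union> {zs ! i}"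
    using i by (auto simp: take_Suc_conv_app_nth)
  then show ?thesis unfolding tw_def using gen_field_nest[of "K \<union> set (take i zs)" "{zs ! i}"] by simp
qed

lemma tw_0: "subfield K \<Longrightarrow> tw K zs 0 = K"
  unfolding tw_def by (simp add: gen_field_id)

lemma tw_mono: "i \<le> j \<Longrightarrow> tw K zs i \<subseteq> tw K zs j"
  unfolding tw_def by (intro gen_field_mono Un_mono order_refl set_take_subset_set_take)

lemma tw_subfield: "subfield (tw K zs i)"
  unfolding tw_def by (rule subfield_gen_field)

lemma tw_K: "K \<subseteq> tw K zs i"
  unfolding tw_def using gen_field_sub by blast

lemma tw_top: "i \<ge> length zs \<Longrightarrow> tw K zs i = gen_field (K \<union> set zs)"
  unfolding tw_def by simp

lemma tw_z: "i < length zs \<Longrightarrow> zs ! i \<in> tw K zs (Suc i)"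
  using tw_step[of i zs K] gen_field_sub by blast

lemma ext_top:
  assumes K: "subfield K" and g: "good K zs" and i: "i \<le> length zs"
    and h: "homfix K (tw K zs i) (tw K zs (length zs)) \<sigma>"
  shows "\<exists>\<sigma>'. homfix K (tw K zs (length zs)) (tw K zs (length zs)) \<sigma>' \<and> (\<forall>x\<in>tw K zs i. \<sigma>' x = \<sigma> x)"
proof -
  let ?N = "tw K zs (length zs)"
  have "j \<le> length zs \<Longrightarrow> \<exists>\<sigma>'. homfix K (tw K zs j) ?N \<sigma>' \<and> (\<forall>x\<in>tw K zs i. \<sigma>' x = \<sigma> x)"
    if "i \<le> j" for j
    using that
  proof (induction j rule: dec_induct)
    case base then show ?case using h by blast
  next
    case (step j)
    then obtain \<sigma>1 where s1: "homfix K (tw K zs j) ?N \<sigma>1" "\<forall>x\<in>tw K zs i. \<sigma>1 x = \<sigma> x" by auto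
    have jl: "j < length zs" using step by simp
    let ?z = "zs ! j"
    show ?case
    proof (cases "?z \<in> tw K zs j")
      case True
      then have "tw K zs (Suc j) = tw K zs j" using tw_step[OF jl] gen_field_in[OF tw_subfield] by metis
      then show ?thesis using s1 by auto
    next
      case False
      obtain z' where z': "z' \<in> ?N" "z' * z' = \<sigma>1 (?z * ?z)" using g s1(1) jl unfolding good_def by blast
      have "?z * ?z \<in> tw K zs j" using g jl unfolding good_def by blast
      from ext_hom[OF tw_subfield tw_subfield tw_K s1(1) this False z']
      obtain \<sigma>2 where "homfix K (gen_field (tw K zs j \<union> {?z})) ?N \<sigma>2" "\<forall>x\<in>tw K zs j. \<sigma>2 x = \<sigma>1 x"
        by blast
      moreover have "tw K zs i \<subseteq> tw K zs j" using step tw_mono by blast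
      ultimately show ?thesis using s1 tw_step[OF jl, of K] by (metis subsetD)
    qed
  qed
  from this[OF i order_refl] show ?thesis by simp
qed

lemma fixed_field:
  fixes K :: "'a::field set"
  assumes K: "subfield K" and two: "(1::'a) + 1 \<noteq> 0" and g: "good K zs"
    and fx: "\<forall>\<sigma>. homfix K (tw K zs (length zs)) (tw K zs (length zs)) \<sigma> \<longrightarrow> \<sigma> x = x"
  shows "i \<le> length zs \<Longrightarrow> x \<in> tw K zs i \<Longrightarrow> x \<in> K"
proof (induction i)
  case 0 then show ?case using tw_0[OF K] by simp
next
  case (Suc i)
  let ?N = "tw K zs (length zs)"
  let ?A = "tw K zs i"
  let ?z = "zs ! i"
  have il: "i < length zs" using Suc by simp
  show ?case
  proof (cases "?z \<in> ?A")
    case True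
    then have "tw K zs (Suc i) = ?A" using tw_step[OF il] gen_field_in[OF tw_subfield] by metis
    then show ?thesis using Suc by auto
  next
    case False
    have e: "?z * ?z \<in> ?A" using g il unfolding good_def by blast
    have G: "tw K zs (Suc i) = qset ?A ?z" using tw_step[OF il] quad_gen[OF tw_subfield e False] by simp
    obtain a b where x: "x = a + b * ?z" "a \<in> ?A" "b \<in> ?A" using Suc.prems G unfolding qset_def by blast
    have AN: "?A \<subseteq> ?N" using il tw_mono[of i "length zs" K zs] by simp
    have zN: "?z \<in> ?N" using tw_z[OF il] tw_mono[of "Suc i" "length zs"] il by auto
    have "- ?z \<in> ?N" using zN subfield_uminus[OF tw_subfield] by blast
    from ext_hom[OF tw_subfield tw_subfield tw_K homfix_id[OF AN] e False this]
    obtain \<tau> where t: "homfix K (tw K zs (Suc i)) ?N \<tau>" "\<forall>y\<in>?A. \<tau> y = y" "\<tau> ?z = - ?z"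
      using tw_step[OF il] by auto
    obtain \<tau>' where t': "homfix K ?N ?N \<tau>'" "\<forall>y\<in>tw K zs (Suc i). \<tau>' y = \<tau> y"
      using ext_top[OF K g _ t(1)] il by auto
    have xS: "x \<in> tw K zs (Suc i)" using Suc by simp
    have "x = \<tau>' x" using fx t'(1) by auto
    also have "\<dots> = \<tau> x" using t' xS by simp
    also have "\<dots> = \<tau> a + \<tau> b * \<tau> ?z"
    proof -
      have aS: "a \<in> tw K zs (Suc i)" "b \<in> tw K zs (Suc i)" using x tw_mono[of i "Suc i" K zs] by auto
      have zS: "?z \<in> tw K zs (Suc i)" by (rule tw_z[OF il])
      have bz: "b * ?z \<in> tw K zs (Suc i)" using subfieldD(5)[OF tw_subfield aS(2) zS] .
      show ?thesis using x hf_add[OF t(1) tw_subfield aS(1) bz] hf_mult[OF t(1) tw_subfield aS(2) zS] by simp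
    qed
    also have "\<dots> = a - b * ?z" using t x by simp
    finally have "a + b * ?z = a - b * ?z" using x by simp
    then have "(1 + 1) * (b * ?z) = 0" by (simp add: algebra_simps)
    then have "b * ?z = 0" using two by simp
    moreover have "?z \<noteq> 0" using False subfieldD(1)[OF tw_subfield] by metis
    ultimately have "b = 0" by simp
    then have "x \<in> ?A" using x by simp
    then show ?thesis using Suc il by simp
  qed
qed

lemma finite_sqrts: "finite {y::'a::field. y * y = v}"
proof -
  have "{y. y * y = v} \<subseteq> {v', - v'}" if "v' * v' = v" for v'
    using sq_root_cases that by auto
  then show ?thesis
    by (cases "\<exists>v'. v' * v' = v") (auto intro: finite_subset)
qed

lemma orbit_fin:
  assumes K: "subfield K" and g: "good K zs"
  shows "i \<le> length zs \<Longrightarrow> \<forall>x\<in>tw K zs i. finite {\<sigma> x |\<sigma>. homfix K (tw K zs i) N \<sigma>}"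
proof (induction i)
  case 0
  have "{\<sigma> x |\<sigma>. homfix K (tw K zs 0) N \<sigma>} \<subseteq> {x}" if "x \<in> tw K zs 0" for x
    using that tw_0[OF K] hf_fix[OF _ tw_subfield] by blast
  then show ?case by (meson finite.emptyI finite_insert finite_subset)
next
  case (Suc i)
  let ?A = "tw K zs i"
  let ?z = "zs ! i"
  have il: "i < length zs" using Suc by simp
  have IH: "\<forall>x\<in>?A. finite {\<sigma> x |\<sigma>. homfix K ?A N \<sigma>}" using Suc by simp
  have restr: "homfix K ?A N \<sigma>" if "homfix K (tw K zs (Suc i)) N \<sigma>" for \<sigma>
    using hf_restrict[OF that tw_subfield] tw_mono[of i "Suc i" K zs] by simp
  show ?case
  proof (cases "?z \<in> ?A")
    case True
    then have "tw K zs (Suc i) = ?A" using tw_step[OF il] gen_field_in[OF tw_subfield] by metis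
    then show ?thesis using IH by simp
  next
    case False
    have e: "?z * ?z \<in> ?A" using g il unfolding good_def by blast
    have G: "tw K zs (Suc i) = qset ?A ?z" using tw_step[OF il] quad_gen[OF tw_subfield e False] by simp
    show ?thesis
    proof
      fix x assume "x \<in> tw K zs (Suc i)"
      then obtain a b where x: "x = a + b * ?z" "a \<in> ?A" "b \<in> ?A" using G unfolding qset_def by blast
      let ?Oa = "{\<sigma> a |\<sigma>. homfix K ?A N \<sigma>}"
      let ?Ob = "{\<sigma> b |\<sigma>. homfix K ?A N \<sigma>}"
      let ?Oe = "{\<sigma> (?z * ?z) |\<sigma>. homfix K ?A N \<sigma>}"
      let ?R = "\<Union>v\<in>?Oe. {y. y * y = v}"
      have fR: "finite ?R" by (intro finite_UN_I) (use IH e finite_sqrts in auto)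
      have "{\<sigma> x |\<sigma>. homfix K (tw K zs (Suc i)) N \<sigma>} \<subseteq> (\<lambda>(p, q, r). p + q * r) ` (?Oa \<times> ?Ob \<times> ?R)"
      proof
        fix y assume "y \<in> {\<sigma> x |\<sigma>. homfix K (tw K zs (Suc i)) N \<sigma>}"
        then obtain \<sigma> where s: "homfix K (tw K zs (Suc i)) N \<sigma>" "y = \<sigma> x" by blast
        have zS: "?z \<in> tw K zs (Suc i)" by (rule tw_z[OF il])
        have AS: "?A \<subseteq> tw K zs (Suc i)" by (rule tw_mono) simp
        have aS: "a \<in> tw K zs (Suc i)" "b \<in> tw K zs (Suc i)" using x AS by auto
        have bz: "b * ?z \<in> tw K zs (Suc i)" using subfieldD(5)[OF tw_subfield aS(2) zS] .
        have "y = \<sigma> a + \<sigma> b * \<sigma> ?z"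
          using s x hf_add[OF s(1) tw_subfield aS(1) bz] hf_mult[OF s(1) tw_subfield aS(2) zS] by simp
        moreover have "\<sigma> ?z * \<sigma> ?z = \<sigma> (?z * ?z)" using hf_mult[OF s(1) tw_subfield] zS by simp
        moreover have "(\<sigma> a, \<sigma> b, \<sigma> ?z) \<in> ?Oa \<times> ?Ob \<times> ?R"
          using restr[OF s(1)] calculation(2) by blast
        ultimately show "y \<in> (\<lambda>(p, q, r). p + q * r) ` (?Oa \<times> ?Ob \<times> ?R)"
          by (intro image_eqI[of _ _ "(\<sigma> a, \<sigma> b, \<sigma> ?z)"]) auto
      qed
      moreover have "finite (?Oa \<times> ?Ob \<times> ?R)" using IH x fR by blast
      ultimately show "finite {\<sigma> x |\<sigma>. homfix K (tw K zs (Suc i)) N \<sigma>}"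
        by (meson finite_imageI finite_subset)
    qed
  qed
qed



lemma lin_mult_coeff:
  fixes y :: "'a::field"
  shows "coeff ([:- y, 1:] * g) n = - y * coeff g n + (if n = 0 then 0 else coeff g (n - 1))"
  by (cases n) (simp_all add: coeff_pCons)

lemma prod_poly_over:
  assumes N: "subfield N"
  shows "finite Os \<Longrightarrow> Os \<subseteq> N \<Longrightarrow> poly_over N (\<Prod>y\<in>Os. [:- y, 1:])"
proof (induction Os rule: finite_induct)
  case empty
  then show ?case unfolding poly_over_def using subfieldD(1,2)[OF N]
    by (auto simp: coeff_1)
next
  case (insert y Os)
  then have g: "\<forall>i. coeff (\<Prod>y\<in>Os. [:- y, 1:]) i \<in> N" unfolding poly_over_def by auto
  have y: "y \<in> N" using insert by auto
  show ?case unfolding poly_over_def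
  proof
    fix n
    show "coeff (\<Prod>y\<in>insert y Os. [:- y, 1:]) n \<in> N"
      using insert(1,2) lin_mult_coeff[of y _ n] g y subfieldD[OF N] subfield_uminus[OF N]
      by simp
  qed
qed

lemma hom_prod_coeff:
  assumes N: "subfield N" and h: "homfix K N M \<tau>"
  shows "finite Os \<Longrightarrow> Os \<subseteq> N \<Longrightarrow>
    \<forall>n. \<tau> (coeff (\<Prod>y\<in>Os. [:- y, 1:]) n) = coeff (\<Prod>y\<in>Os. [:- \<tau> y, 1:]) n"
proof (induction Os rule: finite_induct)
  case empty
  then show ?case using hf_zero[OF h N] hf_one[OF h N] by (simp add: coeff_1)
next
  case (insert y Os)
  have g: "\<forall>i. coeff (\<Prod>y\<in>Os. [:- y, 1:]) i \<in> N"
    using prod_poly_over[OF N insert(1)] insert(4) unfolding poly_over_def by auto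
  have y: "y \<in> N" using insert by auto
  show ?case
  proof
    fix n
    let ?g = "\<Prod>y\<in>Os. [:- y, 1:]"
    have "\<tau> (coeff (\<Prod>y\<in>insert y Os. [:- y, 1:]) n) = \<tau> (- y * coeff ?g n + (if n = 0 then 0 else coeff ?g (n - 1)))"
      using insert(1,2) lin_mult_coeff[of y _ n] by simp
    also have "\<dots> = - \<tau> y * \<tau> (coeff ?g n) + (if n = 0 then 0 else \<tau> (coeff ?g (n - 1)))"
    proof -
      define d where "d = (if n = 0 then 0 else coeff ?g (n - 1))"
      define c where "c = coeff ?g n"
      have dN: "d \<in> N" using g subfieldD(1)[OF N] by (simp add: d_def)
      have cN: "c \<in> N" using g by (simp add: c_def)
      have td: "\<tau> d = (if n = 0 then 0 else \<tau> (coeff ?g (n - 1)))" using hf_zero[OF h N] by (simp add: d_def)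
      have my: "- y \<in> N" using subfield_uminus[OF N y] .
      have myc: "- y * c \<in> N" using subfieldD(5)[OF N my cN] .
      have "\<tau> (- y * c + d) = \<tau> (- y * c) + \<tau> d" using hf_add[OF h N myc dN] .
      also have "\<tau> (- y * c) = \<tau> (- y) * \<tau> c" using hf_mult[OF h N my cN] .
      also have "\<tau> (- y) = - \<tau> y" using hf_uminus[OF h N y] .
      finally show ?thesis using td by (simp add: c_def d_def)
    qed
    also have "\<dots> = coeff (\<Prod>y\<in>insert y Os. [:- \<tau> y, 1:]) n"
      using insert lin_mult_coeff[of "\<tau> y" _ n] by simp
    finally show "\<tau> (coeff (\<Prod>y\<in>insert y Os. [:- y, 1:]) n) = coeff (\<Prod>y\<in>insert y Os. [:- \<tau> y, 1:]) n" .
  qed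
qed

lemma homfix_comp:
  assumes "homfix K A B \<sigma>" "homfix K B C \<tau>"
  shows "homfix K A C (\<tau> \<circ> \<sigma>)"
  using assms unfolding homfix_def by auto

lemma core:
  fixes K :: "'a::field set"
  assumes K: "subfield K" and two: "(1::'a) + 1 \<noteq> 0" and g: "good K zs"
    and x: "x \<in> tw K zs (length zs)"
  shows "\<exists>Os. finite Os \<and> Os \<subseteq> tw K zs (length zs) \<and> x \<in> Os \<and> poly_over K (\<Prod>y\<in>Os. [:- y, 1:])"
proof -
  let ?N = "tw K zs (length zs)"
  define Os where "Os = {\<sigma> x |\<sigma>. homfix K ?N ?N \<sigma>}"
  have fin: "finite Os" unfolding Os_def using orbit_fin[OF K g, of "length zs" ?N] x by simp
  have sub: "Os \<subseteq> ?N" unfolding Os_def using hf_in[OF _ tw_subfield] x by blast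
  have "x = id x \<and> homfix K ?N ?N id" using homfix_id[of ?N ?N K] by simp
  then have xO: "x \<in> Os" unfolding Os_def by blast
  have "coeff (\<Prod>y\<in>Os. [:- y, 1:]) n \<in> K" for n
  proof -
    let ?c = "coeff (\<Prod>y\<in>Os. [:- y, 1:]) n"
    have cN: "?c \<in> ?N" using prod_poly_over[OF tw_subfield fin sub] unfolding poly_over_def by blast
    have "\<tau> ?c = ?c" if t: "homfix K ?N ?N \<tau>" for \<tau>
    proof -
      have img: "\<tau> ` Os \<subseteq> Os"
      proof
        fix u assume "u \<in> \<tau> ` Os"
        then obtain \<sigma> where s: "homfix K ?N ?N \<sigma>" "u = \<tau> (\<sigma> x)" unfolding Os_def by blast
        then have "u = (\<tau> \<circ> \<sigma>) x \<and> homfix K ?N ?N (\<tau> \<circ> \<sigma>)" using homfix_comp[OF s(1) t] by simp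
        then show "u \<in> Os" unfolding Os_def by blast
      qed
      have inj: "inj_on \<tau> Os" using hf_inj[OF t tw_subfield] sub by (meson inj_onI subsetD)
      have eq: "\<tau> ` Os = Os" using endo_inj_surj[OF fin img inj] .
      have "\<tau> ?c = coeff (\<Prod>y\<in>Os. [:- \<tau> y, 1:]) n" using hom_prod_coeff[OF tw_subfield t fin sub] by blast
      also have "(\<Prod>y\<in>Os. [:- \<tau> y, 1:]) = (\<Prod>y\<in>\<tau> ` Os. [:- y, 1:])"
        using prod.reindex[OF inj, of "\<lambda>y. [:- y, 1:]"] by simp
      also have "\<dots> = (\<Prod>y\<in>Os. [:- y, 1:])" using eq by simp
      finally show ?thesis .
    qed
    then show ?thesis using fixed_field[OF K two g _ order_refl cN] by blast
  qed
  then show ?thesis using fin sub xO unfolding poly_over_def by blast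
qed

lemma split_dvd:
  fixes q :: "'a::field poly"
  shows "finite Os \<Longrightarrow> q dvd (\<Prod>y\<in>Os. [:- y, 1:]) \<Longrightarrow> q \<noteq> 0 \<Longrightarrow>
    \<exists>rs. distinct rs \<and> set rs \<subseteq> Os \<and> q = smult (lead_coeff q) (\<Prod>r\<leftarrow>rs. [:- r, 1:])"
proof (induction Os arbitrary: q rule: finite_induct)
  case empty
  then have "is_unit q" by simp
  then have "degree q = 0" by (simp add: is_unit_iff_degree empty.prems(2))
  then have "q = [:lead_coeff q:]" by (metis degree_0_id)
  moreover have "smult (lead_coeff q) 1 = [:lead_coeff q:]" by (simp add: one_pCons)
  ultimately show ?case by (intro exI[of _ "[]"]) simp
next
  case (insert y Os)
  let ?l = "[:- y, 1:] :: 'a poly"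
  have dv: "q dvd ?l * (\<Prod>y\<in>Os. [:- y, 1:])" using insert by simp
  show ?case
  proof (cases "poly q y = 0")
    case True
    then obtain q' where q': "q = ?l * q'" using poly_eq_0_iff_dvd by (metis dvdE)
    have "q' \<noteq> 0" using q' insert.prems by auto
    have "?l * q' dvd ?l * (\<Prod>y\<in>Os. [:- y, 1:])" using dv unfolding q' .
    then have "?l = 0 \<or> q' dvd (\<Prod>y\<in>Os. [:- y, 1:])" by (simp only: dvd_mult_cancel_left)
    moreover have "?l \<noteq> 0" by simp
    ultimately have "q' dvd (\<Prod>y\<in>Os. [:- y, 1:])" by blast
    from insert.IH[OF this \<open>q' \<noteq> 0\<close>] obtain rs where
      rs: "distinct rs" "set rs \<subseteq> Os" "q' = smult (lead_coeff q') (\<Prod>r\<leftarrow>rs. [:- r, 1:])" by blast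
    have lc: "lead_coeff q = lead_coeff q'" unfolding q' lead_coeff_mult by simp
    show ?thesis
    proof (intro exI[of _ "y # rs"] conjI)
      show "distinct (y # rs)" using rs insert by auto
      show "set (y # rs) \<subseteq> insert y Os" using rs by auto
      show "q = smult (lead_coeff q) (\<Prod>r\<leftarrow>y # rs. [:- r, 1:])"
      proof -
        let ?P = "\<Prod>r\<leftarrow>rs. [:- r, 1:]"
        have "q = ?l * smult (lead_coeff q') ?P" using q' rs(3) by metis
        also have "\<dots> = smult (lead_coeff q') (?l * ?P)" by (rule mult_smult_right)
        also have "\<dots> = smult (lead_coeff q) (\<Prod>r\<leftarrow>y # rs. [:- r, 1:])"
          using lc by (simp only: list.map prod_list.Cons)
        finally show ?thesis .
      qed
    qed
  next
    case False
    let ?g = "\<Prod>y\<in>Os. [:- y, 1:]"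
    obtain h where h: "?l * ?g = q * h" using dv by (metis dvdE)
    have "poly (?l * ?g) y = 0" by simp
    then have "poly (q * h) y = 0" using h by metis
    then have "poly h y = 0" using False by (simp only: poly_mult mult_eq_0_iff) blast
    then obtain h' where h': "h = ?l * h'" using poly_eq_0_iff_dvd by (metis dvdE)
    have "?l * ?g = q * (?l * h')" using h h' by metis
    also have "\<dots> = ?l * (q * h')" by (simp only: mult.left_commute)
    finally have "?l * ?g = ?l * (q * h')" .
    then have "?g = q * h'" by (metis mult_left_cancel pCons_eq_0_iff one_neq_zero)
    then have "q dvd ?g" by simp
    from insert.IH[OF this insert.prems(2)] show ?thesis by auto
  qed
qed

lemma galois_from_orbits:
  assumes K: "subfield K" and N: "subfield N" and KN: "K \<subseteq> N"
    and orb: "\<forall>x\<in>N. \<exists>Os. finite Os \<and> Os \<subseteq> N \<and> x \<in> Os \<and> poly_over K (\<Prod>y\<in>Os. [:- y, 1:])"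
  shows "galois_over K N"
  unfolding galois_over_def
proof (intro conjI K N KN ballI)
  fix x assume "x \<in> N"
  then obtain Os where Os: "finite Os" "Os \<subseteq> N" "x \<in> Os" "poly_over K (\<Prod>y\<in>Os. [:- y, 1:])" using orb by blast
  let ?f = "\<Prod>y\<in>Os. [:- y, 1:]"
  let ?P = "\<lambda>q. poly_over K q \<and> q \<noteq> 0 \<and> poly q x = 0 \<and> q dvd ?f"
  have f0: "?f \<noteq> 0" using Os(1) by simp
  have fx: "poly ?f x = 0" using Os(1,3) by (simp add: poly_prod prod_zero_iff)
  have "?P ?f" using Os f0 fx by simp
  from ex_has_least_nat[of ?P, OF this, of degree]
  obtain q where q: "?P q" and qmin: "\<And>r. ?P r \<Longrightarrow> degree q \<le> degree r" by blast
  have dq: "degree q \<ge> 1"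
  proof (rule ccontr)
    assume "\<not> 1 \<le> degree q"
    then have "degree q = 0" by simp
    then have "q = [:coeff q 0:]" by (metis degree_0_id)
    then show False using q by (metis poly_pCons mult_zero_right add.right_neutral pCons_0_0 poly_0)
  qed
  have irr: "irreducible_over K q"
    unfolding irreducible_over_def
  proof (intro conjI dq)
    show "poly_over K q" using q by simp
    show "\<not> (\<exists>q1 q2. poly_over K q1 \<and> poly_over K q2 \<and> 1 \<le> degree q1 \<and> 1 \<le> degree q2 \<and> q = q1 * q2)"
    proof
      assume "\<exists>q1 q2. poly_over K q1 \<and> poly_over K q2 \<and> 1 \<le> degree q1 \<and> 1 \<le> degree q2 \<and> q = q1 * q2"
      then obtain q1 q2 where qq: "poly_over K q1" "poly_over K q2" "1 \<le> degree q1" "1 \<le> degree q2" "q = q1 * q2"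
        by blast
      have nz: "q1 \<noteq> 0" "q2 \<noteq> 0" using qq by auto
      have dg: "degree q = degree q1 + degree q2" using qq(5) degree_mult_eq[OF nz] by simp
      have "poly q1 x = 0 \<or> poly q2 x = 0" using q qq(5) by simp
      then show False
      proof
        assume "poly q1 x = 0"
        then have "?P q1" using qq nz q dvd_trans[of q1 q ?f] by auto
        then show False using qmin dg qq(4) by fastforce
      next
        assume "poly q2 x = 0"
        then have "?P q2" using qq nz q dvd_trans[of q2 q ?f] by auto
        then show False using qmin dg qq(3) by fastforce
      qed
    qed
  qed
  obtain rs where rs: "distinct rs" "set rs \<subseteq> Os" "q = smult (lead_coeff q) (\<Prod>r\<leftarrow>rs. [:- r, 1:])"
    using split_dvd[OF Os(1)] q by blast
  show "\<exists>p. irreducible_over K p \<and> poly p x = 0 \<and>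
          (\<exists>rs. distinct rs \<and> set rs \<subseteq> N \<and> p = smult (lead_coeff p) (\<Prod>r\<leftarrow>rs. [:- r, 1:]))"
    using irr q rs Os(2) by blast
qed



lemma sum2: "(\<Sum>i<(2::nat). f i) = f 0 + (f 1 :: 'a::comm_monoid_add)"
  by (simp add: numeral_2_eq_2)

lemma span_swap:
  fixes K :: "'a::field set"
  assumes K: "subfield K" and v: "v \<notin> K" and p: "p0 \<in> K" "p1 \<in> K" "1 = p0 * u + p1 * v"
    and c: "c0 \<in> K" "c1 \<in> K"
  shows "\<exists>\<alpha> \<beta>. \<alpha> \<in> K \<and> \<beta> \<in> K \<and> c0 * u + c1 * v = \<alpha> + \<beta> * v"
proof -
  have p0: "p0 \<noteq> 0"
  proof
    assume "p0 = 0"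
    then have "1 = p1 * v" using p by simp
    then have p1: "p1 \<noteq> 0" by auto
    then have "v = 1 / p1" using \<open>1 = p1 * v\<close> by (simp add: field_simps)
    then show False using v subfield_divide[OF K] subfieldD(2)[OF K] p(2) by metis
  qed
  have u: "u = 1 / p0 - (p1 / p0) * v" using p(3) p0 by (simp add: field_simps)
  have "c0 * u + c1 * v = c0 / p0 + (c1 - c0 * (p1 / p0)) * v" unfolding u by (simp add: algebra_simps)
  moreover have "c0 / p0 \<in> K" "c1 - c0 * (p1 / p0) \<in> K"
    using c p subfield_divide[OF K] subfieldD[OF K] by auto
  ultimately show ?thesis by blast
qed



lemma ex1_eq: "\<exists>!x. P x \<Longrightarrow> P a \<Longrightarrow> P b \<Longrightarrow> a = b"
  by blast

lemma quad_ext_struct: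
  fixes K :: "'a::field set"
  assumes K: "subfield K" and two: "(1::'a) + 1 \<noteq> 0" and q: "quadratic_ext K E"
  shows "\<exists>t\<in>E. t * t \<in> K \<and> t \<notin> K \<and> E \<subseteq> qset K t"
proof -
  have E: "subfield E" and KE: "K \<subseteq> E" using q unfolding quadratic_ext_def by auto
  obtain b where b: "length b = 2" "set b \<subseteq> E"
    and uq: "\<forall>x\<in>E. \<exists>!c::nat \<Rightarrow> 'a. (\<forall>i<2. c i \<in> K) \<and> (\<forall>i\<ge>2. c i = 0) \<and> x = (\<Sum>i<2. c i * b ! i)"
    using q unfolding quadratic_ext_def ext_dim_def by blast
  define b0 where "b0 = b ! 0"
  define b1 where "b1 = b ! 1"
  have bE: "b0 \<in> E" "b1 \<in> E" using b unfolding b0_def b1_def by auto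
  have span: "\<exists>c0 c1. c0 \<in> K \<and> c1 \<in> K \<and> x = c0 * b0 + c1 * b1" if xE: "x \<in> E" for x
  proof -
    obtain c where "(\<forall>i<2. c i \<in> K) \<and> (\<forall>i\<ge>2. c i = 0) \<and> x = (\<Sum>i<2. c i * b ! i)"
      using ex1_implies_ex[OF uq[rule_format, OF xE]] by blast
    then have "c 0 \<in> K" "c 1 \<in> K" "x = c 0 * b0 + c 1 * b1" unfolding sum2 b0_def b1_def by auto
    then show ?thesis by blast
  qed
  have indep: "c0 = 0 \<and> c1 = 0" if "c0 \<in> K" "c1 \<in> K" "c0 * b0 + c1 * b1 = 0" for c0 c1
  proof -
    define c where "c i = (if i = 0 then c0 else if i = 1 then c1 else 0)" for i :: nat
    have c1: "(\<forall>i<2. c i \<in> K) \<and> (\<forall>i\<ge>2. c i = 0) \<and> 0 = (\<Sum>i<2. c i * b ! i)"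
      using that unfolding sum2 c_def b0_def b1_def by auto
    define c0f where "c0f = (\<lambda>_::nat. 0::'a)"
    have c2: "(\<forall>i<2. c0f i \<in> K) \<and> (\<forall>i\<ge>2. c0f i = 0) \<and> 0 = (\<Sum>i<2. c0f i * b ! i)"
      using subfieldD(1)[OF K] by (simp add: c0f_def)
    have E0: "0 \<in> E" using subfieldD(1)[OF E] .
    have U: "\<exists>!c. (\<forall>i<2. c i \<in> K) \<and> (\<forall>i\<ge>2. c i = 0) \<and> 0 = (\<Sum>i<2. c i * b ! i)"
      using uq E0 by (rule bspec)
    have "c = c0f" by (rule ex1_eq[OF U]) (use c1 c2 in auto)
    then show ?thesis unfolding c_def c0f_def by (metis one_neq_zero)
  qed
  have one: "\<exists>p0 p1. p0 \<in> K \<and> p1 \<in> K \<and> 1 = p0 * b0 + p1 * b1" using span subfieldD(2)[OF E] by blast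
  then obtain p0 p1 where p: "p0 \<in> K" "p1 \<in> K" "1 = p0 * b0 + p1 * b1" by blast
  have "\<exists>y\<in>E. y \<notin> K \<and> (\<forall>x\<in>E. \<exists>\<alpha> \<beta>. \<alpha> \<in> K \<and> \<beta> \<in> K \<and> x = \<alpha> + \<beta> * y)"
  proof (cases "b1 \<in> K")
    case False
    show ?thesis
    proof (intro bexI[of _ b1] conjI ballI False)
      fix x assume "x \<in> E"
      then obtain c0 c1 where "c0 \<in> K" "c1 \<in> K" "x = c0 * b0 + c1 * b1" using span by blast
      then show "\<exists>\<alpha> \<beta>. \<alpha> \<in> K \<and> \<beta> \<in> K \<and> x = \<alpha> + \<beta> * b1"
        using span_swap[OF K False p] by blast
    qed (use bE in auto)
  next
    case True
    have b0K: "b0 \<notin> K"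
    proof
      assume "b0 \<in> K"
      then have "b1 = 0 \<and> - b0 = 0" using indep[of b1 "- b0"] True subfield_uminus[OF K] by (simp add: algebra_simps)
      then have "b0 = 0" "b1 = 0" by auto
      then show False using indep[of 1 0] subfieldD(1,2)[OF K] by simp
    qed
    show ?thesis
    proof (intro bexI[of _ b0] conjI ballI b0K)
      fix x assume "x \<in> E"
      then obtain c0 c1 where "c0 \<in> K" "c1 \<in> K" "x = c1 * b1 + c0 * b0" using span by (metis add.commute)
      moreover have "1 = p1 * b1 + p0 * b0" using p by (simp add: add.commute)
      ultimately show "\<exists>\<alpha> \<beta>. \<alpha> \<in> K \<and> \<beta> \<in> K \<and> x = \<alpha> + \<beta> * b0"
        using span_swap[OF K b0K, of p1 p0 b1] p by blast
    qed (use bE in auto)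
  qed
  then obtain y where y: "y \<in> E" "y \<notin> K" and yspan: "\<forall>x\<in>E. \<exists>\<alpha> \<beta>. \<alpha> \<in> K \<and> \<beta> \<in> K \<and> x = \<alpha> + \<beta> * y"
    by blast
  obtain \<alpha> \<beta> where ab: "\<alpha> \<in> K" "\<beta> \<in> K" "y * y = \<alpha> + \<beta> * y" using yspan subfieldD(5)[OF E y(1) y(1)] by blast
  have two': "(2::'a) \<noteq> 0" using two by simp
  define hh where "hh = \<beta> / 2"
  have h2: "hh \<in> K" unfolding hh_def using ab subfield_divide[OF K] subfieldD(2,3)[OF K] by (metis one_add_one)
  have bh: "\<beta> = hh + hh" unfolding hh_def using two' by simp
  define t where "t = y - hh"
  have "t * t = y * y - (hh + hh) * y + hh * hh" unfolding t_def by (simp add: algebra_simps)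
  also have "y * y = \<alpha> + (hh + hh) * y" using ab(3) unfolding bh .
  finally have "t * t = \<alpha> + hh * hh" by simp
  then have tt: "t * t \<in> K" using ab h2 subfieldD[OF K] by simp
  have tE: "t \<in> E" unfolding t_def using y h2 KE subfieldD(4)[OF E] by auto
  have tK: "t \<notin> K"
  proof
    assume "t \<in> K"
    then have "t + hh \<in> K" using h2 subfieldD(3)[OF K] by blast
    then show False using y unfolding t_def by simp
  qed
  have "E \<subseteq> qset K t"
  proof
    fix x assume "x \<in> E"
    then obtain a c where ac: "a \<in> K" "c \<in> K" "x = a + c * y" using yspan by blast
    have "x = (a + c * hh) + c * t" unfolding t_def ac(3) by (simp add: algebra_simps)
    moreover have "a + c * hh \<in> K" using ac h2 subfieldD[OF K] by simp
    ultimately show "x \<in> qset K t" unfolding qset_def using ac by blast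
  qed
  then show ?thesis using tE tt tK by blast
qed



lemma quad_is_ext:
  assumes K: "subfield K" and e: "z * z \<in> K" and z: "z \<notin> K"
  shows "quadratic_ext K (gen_field (K \<union> {z}))"
proof -
  have G: "gen_field (K \<union> {z}) = qset K z" by (rule quad_gen[OF K e z])
  have "ext_dim K (qset K z) 2"
    unfolding ext_dim_def
  proof (intro exI[of _ "[1, z]"] conjI ballI)
    show "length [1, z] = 2" by simp
    have "1 \<in> qset K z" unfolding qset_def
      by (rule CollectI, rule exI[of _ 1], rule exI[of _ 0]) (simp add: subfieldD(1,2)[OF K])
    moreover have "z \<in> qset K z" unfolding qset_def
      by (rule CollectI, rule exI[of _ 0], rule exI[of _ 1]) (simp add: subfieldD(1,2)[OF K])
    ultimately show "set [1, z] \<subseteq> qset K z" by simp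
  next
    fix x assume "x \<in> qset K z"
    then obtain a b where x: "a \<in> K" "b \<in> K" "x = a + b * z" unfolding qset_def by blast
    define c where "c i = (if i = 0 then a else if i = 1 then b else 0)" for i :: nat
    show "\<exists>!c. (\<forall>i<2. c i \<in> K) \<and> (\<forall>i\<ge>2. c i = 0) \<and> x = (\<Sum>i<2. c i * [1, z] ! i)"
    proof (rule ex1I[of _ c])
      show "(\<forall>i<2. c i \<in> K) \<and> (\<forall>i\<ge>2. c i = 0) \<and> x = (\<Sum>i<2. c i * [1, z] ! i)"
        using x unfolding sum2 c_def by (auto simp: less_2_cases_iff)
    next
      fix d assume d: "(\<forall>i<2. d i \<in> K) \<and> (\<forall>i\<ge>2. d i = 0) \<and> x = (\<Sum>i<2. d i * [1, z] ! i)"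
      then have "a + b * z = d 0 + d 1 * z" "d 0 \<in> K" "d 1 \<in> K" using x unfolding sum2 by auto
      then have "a = d 0 \<and> b = d 1" using quad_unique[OF K z x(1,2)] by blast
      then show "d = c"
        using d unfolding c_def by (intro ext) (auto simp: not_less)
    qed
  qed
  then show ?thesis unfolding quadratic_ext_def G using qset_subfield[OF K e z] K
    apply (intro conjI)
    apply simp_all
    unfolding qset_def using subfieldD(1)[OF K] by force
qed



lemma quad_galois1:
  fixes K :: "'a::field set"
  assumes K: "subfield K" and two: "(1::'a) + 1 \<noteq> 0" and e: "z * z \<in> K"
  shows "galois_over K (gen_field (K \<union> {z}))"
proof -
  have N: "tw K [z] 1 = gen_field (K \<union> {z})" unfolding tw_def by simp
  have g: "good K [z]"
    unfolding good_def
  proof (intro allI impI)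
    fix i assume "i < length [z]"
    then have i: "i = 0" by simp
    show "[z] ! i * [z] ! i \<in> tw K [z] i \<and> (\<forall>\<sigma>. homfix K (tw K [z] i) (tw K [z] (length [z])) \<sigma> \<longrightarrow>
        (\<exists>z'\<in>tw K [z] (length [z]). z' * z' = \<sigma> ([z] ! i * [z] ! i)))"
    proof
    show "[z] ! i * [z] ! i \<in> tw K [z] i" using i e tw_0[OF K] by simp
    show "\<forall>\<sigma>. homfix K (tw K [z] i) (tw K [z] (length [z])) \<sigma> \<longrightarrow>
        (\<exists>z'\<in>tw K [z] (length [z]). z' * z' = \<sigma> ([z] ! i * [z] ! i))"
    proof (intro allI impI)
      fix \<sigma> assume "homfix K (tw K [z] i) (tw K [z] (length [z])) \<sigma>"
      then have "\<sigma> (z * z) = z * z" using hf_fix[OF _ tw_subfield] e by blast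
      moreover have "z \<in> tw K [z] (length [z])" using tw_z[of 0 "[z]" K] by simp
      ultimately show "\<exists>z'\<in>tw K [z] (length [z]). z' * z' = \<sigma> ([z] ! i * [z] ! i)" using i by auto
    qed
    qed
  qed
  show ?thesis
    using galois_from_orbits[OF K tw_subfield[of K "[z]" 1] tw_K] core[OF K two g] N by simp
qed



lemma quad_step_sub: "M \<subseteq> quad_step K M"
  unfolding quad_step_def using gen_field_sub by blast

lemma quad_step_subfield: "subfield (quad_step K M)"
  unfolding quad_step_def by (rule subfield_gen_field)

lemma L2_has_sqrt:
  fixes K :: "'a::field set"
  assumes K: "subfield K" and two: "(1::'a) + 1 \<noteq> 0" and e: "t * t \<in> K"
  shows "t \<in> quad_step K K"
proof (cases "t \<in> K")
  case True then show ?thesis using quad_step_sub by blast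
next
  case False
  let ?E = "gen_field (K \<union> {t})"
  have "quadratic_ext K ?E \<and> galois_over K ?E" using quad_is_ext[OF K e False] quad_galois1[OF K two e] by simp
  moreover have "t \<in> ?E" using gen_field_sub by blast
  ultimately have "t \<in> \<Union>{E. quadratic_ext K E \<and> galois_over K E}"
    by (intro UnionI[of ?E]) simp_all
  then have "t \<in> K \<union> \<Union>{E. quadratic_ext K E \<and> galois_over K E}" by (rule UnI2)
  then show ?thesis unfolding quad_step_def by (rule subsetD[OF gen_field_sub])
qed

definition Tsq :: "'a::field set \<Rightarrow> 'a set" where
  "Tsq K = {t. t * t \<in> K}"

definition Ug :: "'a::field set \<Rightarrow> 'a set" where
  "Ug K = {x. \<exists>ts. set ts \<subseteq> Tsq K \<and> x \<in> gen_field (K \<union> set ts)}"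

lemma UgI: "set ts \<subseteq> Tsq K \<Longrightarrow> x \<in> gen_field (K \<union> set ts) \<Longrightarrow> x \<in> Ug K"
  unfolding Ug_def by blast

lemma Ug_subfield: "subfield (Ug K)"
proof -
  have two: "\<exists>ts. set ts \<subseteq> Tsq K \<and> x \<in> gen_field (K \<union> set ts) \<and> y \<in> gen_field (K \<union> set ts)"
    if xy: "x \<in> Ug K" "y \<in> Ug K" for x y
  proof -
    obtain ts1 where 1: "set ts1 \<subseteq> Tsq K" "x \<in> gen_field (K \<union> set ts1)" using xy(1) unfolding Ug_def by blast
    obtain ts2 where 2: "set ts2 \<subseteq> Tsq K" "y \<in> gen_field (K \<union> set ts2)" using xy(2) unfolding Ug_def by blast
    have "gen_field (K \<union> set ts1) \<subseteq> gen_field (K \<union> set (ts1 @ ts2))"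
      "gen_field (K \<union> set ts2) \<subseteq> gen_field (K \<union> set (ts1 @ ts2))"
      by (intro gen_field_mono; auto)+
    then show ?thesis using 1 2 by (intro exI[of _ "ts1 @ ts2"]) auto
  qed
  have z: "0 \<in> Ug K" "1 \<in> Ug K" unfolding Ug_def
    using subfieldD(1,2)[OF subfield_gen_field, of "K \<union> set []"] by (auto intro!: exI[of _ "[]"])
  show ?thesis unfolding subfield_def
  proof (intro conjI ballI z)
    fix x y assume xy: "x \<in> Ug K" "y \<in> Ug K"
    from two[OF xy] obtain ts where ts: "set ts \<subseteq> Tsq K" "x \<in> gen_field (K \<union> set ts)" "y \<in> gen_field (K \<union> set ts)"
      by blast
    note sf = subfieldD[OF subfield_gen_field[of "K \<union> set ts"]]
    show "x + y \<in> Ug K" "x - y \<in> Ug K" "x * y \<in> Ug K"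
      using UgI[OF ts(1)] sf(3,4,5)[OF ts(2,3)] by auto
  next
    fix x assume "x \<in> Ug K"
    then obtain ts where ts: "set ts \<subseteq> Tsq K" "x \<in> gen_field (K \<union> set ts)" unfolding Ug_def by blast
    note sf = subfieldD[OF subfield_gen_field[of "K \<union> set ts"]]
    show "inverse x \<in> Ug K" using UgI[OF ts(1)] sf(6)[OF ts(2)] by auto
  qed
qed

lemma L2_sub_Ug:
  fixes K :: "'a::field set"
  assumes K: "subfield K" and two: "(1::'a) + 1 \<noteq> 0"
  shows "quad_step K K \<subseteq> Ug K"
  unfolding quad_step_def
proof (rule gen_field_least[OF Ug_subfield], rule Un_least)
  show "K \<subseteq> Ug K" unfolding Ug_def using gen_field_sub[of "K \<union> set []"] by (auto intro!: exI[of _ "[]"])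
  show "\<Union>{E. quadratic_ext K E \<and> galois_over K E} \<subseteq> Ug K"
  proof (rule Union_least)
    fix E assume "E \<in> {E. quadratic_ext K E \<and> galois_over K E}"
    then obtain t where t: "t * t \<in> K" "t \<notin> K" "E \<subseteq> qset K t"
      using quad_ext_struct[OF K two] by blast
    have "qset K t = gen_field (K \<union> set [t])" using quad_gen[OF K t(1,2)] by simp
    moreover have "set [t] \<subseteq> Tsq K" using t unfolding Tsq_def by simp
    ultimately have "qset K t \<subseteq> Ug K" unfolding Ug_def by blast
    then show "E \<subseteq> Ug K" using t(3) by (rule order_trans[rotated])
  qed
qed

lemma combine:
  assumes fin: "finite S"
    and mono: "\<And>s A B. A \<subseteq> B \<Longrightarrow> Q s A \<Longrightarrow> Q s B"
  shows "(\<forall>s\<in>S. \<exists>ts. set ts \<subseteq> T \<and> Q s (gen_field (L \<union> set ts))) \<Longrightarrow>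
     \<exists>ts. set ts \<subseteq> T \<and> (\<forall>s\<in>S. Q s (gen_field (L \<union> set ts)))"
  using fin
proof (induction S rule: finite_induct)
  case empty then show ?case by (intro exI[of _ "[]"]) simp
next
  case (insert s S)
  then obtain ts1 where 1: "set ts1 \<subseteq> T" "\<forall>s\<in>S. Q s (gen_field (L \<union> set ts1))" by auto
  obtain ts2 where 2: "set ts2 \<subseteq> T" "Q s (gen_field (L \<union> set ts2))" using insert.prems by auto
  have "gen_field (L \<union> set ts1) \<subseteq> gen_field (L \<union> set (ts1 @ ts2))"
    "gen_field (L \<union> set ts2) \<subseteq> gen_field (L \<union> set (ts1 @ ts2))"
    by (intro gen_field_mono; auto)+
  then have "\<forall>s'\<in>insert s S. Q s' (gen_field (L \<union> set (ts1 @ ts2)))"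
    using 1(2) 2(2) mono by blast
  moreover have "set (ts1 @ ts2) \<subseteq> T" using 1(1) 2(1) by simp
  ultimately show ?case by blast
qed

lemma poly_over_pCons: "poly_over B (pCons a p) \<Longrightarrow> a \<in> B \<and> poly_over B p"
  unfolding poly_over_def by (metis coeff_pCons_0 coeff_pCons_Suc)

lemma poly_in:
  assumes B: "subfield B" and y: "y \<in> B"
  shows "poly_over B p \<Longrightarrow> poly p y \<in> B"
proof (induction p rule: pCons_induct)
  case 0 then show ?case using subfieldD(1)[OF B] by simp
next
  case (pCons a p)
  then show ?case using poly_over_pCons[OF pCons.prems] subfieldD[OF B] y by simp
qed

lemma hom_poly:
  assumes h: "homfix K B M \<sigma>" and B: "subfield B" and KB: "K \<subseteq> B" and y: "y \<in> B"
  shows "poly_over K p \<Longrightarrow> \<sigma> (poly p y) = poly p (\<sigma> y)"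
proof (induction p rule: pCons_induct)
  case 0 then show ?case using hf_zero[OF h B] by simp
next
  case (pCons a p)
  have a: "a \<in> K" and p: "poly_over K p" using poly_over_pCons[OF pCons.prems] by auto
  have pB: "poly_over B p" using p KB unfolding poly_over_def by auto
  have py: "poly p y \<in> B" by (rule poly_in[OF B y pB])
  have "\<sigma> (poly (pCons a p) y) = \<sigma> (a + y * poly p y)" by simp
  also have "\<dots> = \<sigma> a + \<sigma> y * \<sigma> (poly p y)"
    using hf_add[OF h B] hf_mult[OF h B y py] subfieldD(5)[OF B y py] a KB by auto
  also have "\<dots> = a + \<sigma> y * poly p (\<sigma> y)" using pCons.IH[OF p] hf_fix[OF h B a] by simp
  finally show ?case by simp
qed



lemma qset_mono: "A \<subseteq> B \<Longrightarrow> qset A w \<subseteq> qset B w"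
  unfolding qset_def by blast

lemma qset_closed: "subfield B \<Longrightarrow> A \<subseteq> B \<Longrightarrow> w \<in> B \<Longrightarrow> qset A w \<subseteq> B"
  unfolding qset_def using subfieldD(3,5) by blast

lemma poly_prod_root: "poly (\<Prod>r\<leftarrow>rs. [:- r, 1:]) (x::'a::field) = 0 \<Longrightarrow> x \<in> set rs"
  by (induction rs) auto

lemma key:
  fixes F L :: "'a::field set"
  assumes F: "subfield F" and L: "subfield L" and FL: "F \<subseteq> L" and two: "(1::'a) + 1 \<noteq> 0"
    and qc: "\<forall>x::'a. \<exists>y. y * y = x"
    and F2L2: "quad_step F F \<subseteq> quad_step L L"
    and qe: "quadratic_ext (quad_step F F) E" and ge: "galois_over F E"
  shows "E \<subseteq> quad_step L (quad_step L L)"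
proof -
  define F2 where "F2 = quad_step F F"
  define L2 where "L2 = quad_step L L"
  have sF2: "subfield F2" unfolding F2_def by (rule quad_step_subfield)
  have sL2: "subfield L2" unfolding L2_def by (rule quad_step_subfield)
  have LL2: "L \<subseteq> L2" unfolding L2_def by (rule quad_step_sub)
  have F2L2': "F2 \<subseteq> L2" using F2L2 unfolding F2_def L2_def .
  obtain w where w: "w \<in> E" "w * w \<in> F2" "w \<notin> F2" "E \<subseteq> qset F2 w"
    using quad_ext_struct[OF sF2 two qe[folded F2_def]] by blast
  define c where "c = w * w"
  have cL2: "c \<in> L2" using w F2L2' unfolding c_def by blast
  have L2L3: "L2 \<subseteq> quad_step L L2" by (rule quad_step_sub)
  show ?thesis
  proof (cases "w \<in> L2")
    case True
    have "qset F2 w \<subseteq> L2" using qset_closed[OF sL2 F2L2' True] .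
    then show ?thesis using w(4) L2L3 unfolding L2_def by blast
  next
    case False
    define M where "M = gen_field (L2 \<union> {w})"
    have MQ: "M = qset L2 w" unfolding M_def using quad_gen[OF sL2 cL2[unfolded c_def] False] .
    have qM: "quadratic_ext L2 M" unfolding M_def using quad_is_ext[OF sL2 cL2[unfolded c_def] False] .
    have sM: "subfield M" unfolding M_def by (rule subfield_gen_field)
    have LM: "L \<subseteq> M" using LL2 gen_field_sub unfolding M_def by blast
    obtain p where p: "irreducible_over F p" "poly p w = 0"
      and rs0: "\<exists>rs. distinct rs \<and> set rs \<subseteq> E \<and> p = smult (lead_coeff p) (\<Prod>r\<leftarrow>rs. [:- r, 1:])"
      using ge w(1) unfolding galois_over_def by blast
    obtain rs where rs: "set rs \<subseteq> E" "p = smult (lead_coeff p) (\<Prod>r\<leftarrow>rs. [:- r, 1:])" using rs0 by blast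
    have pF: "poly_over F p" and pdeg: "degree p \<ge> 1" using p(1) unfolding irreducible_over_def by auto
    have pL: "poly_over L p" using pF FL unfolding poly_over_def by blast
    have lc: "lead_coeff p \<noteq> 0" using pdeg by auto
    have L2U: "L2 \<subseteq> Ug L" unfolding L2_def by (rule L2_sub_Ug[OF L two])
    have F2U: "F2 \<subseteq> Ug F" unfolding F2_def by (rule L2_sub_Ug[OF F two])
    have TFL: "Tsq F \<subseteq> Tsq L" unfolding Tsq_def using FL by blast
    have TL2: "Tsq L \<subseteq> L2" unfolding Tsq_def L2_def using L2_has_sqrt[OF L two] by blast
    have F2toL: "\<exists>ts. set ts \<subseteq> Tsq L \<and> a \<in> gen_field (L \<union> set ts)" if aF2: "a \<in> F2" for a
    proof -
      obtain ts where "set ts \<subseteq> Tsq F" "a \<in> gen_field (F \<union> set ts)" using F2U aF2 unfolding Ug_def by blast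
      moreover have "gen_field (F \<union> set ts) \<subseteq> gen_field (L \<union> set ts)" using FL by (intro gen_field_mono) blast
      ultimately show ?thesis using TFL by blast
    qed
    have "galois_over L M"
    proof (rule galois_from_orbits[OF L sM LM], rule ballI)
      fix x assume "x \<in> M"
      then obtain u v where x: "u \<in> L2" "v \<in> L2" "x = u + v * w" unfolding MQ qset_def by blast
      have "\<exists>ts. set ts \<subseteq> Tsq L \<and> (\<forall>s\<in>{u, v, c}. s \<in> gen_field (L \<union> set ts))"
      proof (rule combine)
        show "\<forall>s\<in>{u, v, c}. \<exists>ts. set ts \<subseteq> Tsq L \<and> s \<in> gen_field (L \<union> set ts)"
          using x cL2 L2U unfolding Ug_def by blast
      qed auto
      then obtain ts1 where ts1: "set ts1 \<subseteq> Tsq L" "u \<in> gen_field (L \<union> set ts1)"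
        "v \<in> gen_field (L \<union> set ts1)" "c \<in> gen_field (L \<union> set ts1)" by auto
      have "\<exists>ts. set ts \<subseteq> Tsq L \<and> (\<forall>r\<in>set rs. r \<in> qset (gen_field (L \<union> set ts)) w)"
      proof (rule combine)
        show "\<forall>r\<in>set rs. \<exists>ts. set ts \<subseteq> Tsq L \<and> r \<in> qset (gen_field (L \<union> set ts)) w"
        proof
          fix r assume "r \<in> set rs"
          then have "r \<in> qset F2 w" using rs(1) w(4) by blast
          then obtain a b where ab: "a \<in> F2" "b \<in> F2" "r = a + b * w" unfolding qset_def by blast
          have "\<exists>ts. set ts \<subseteq> Tsq L \<and> (\<forall>s\<in>{a, b}. s \<in> gen_field (L \<union> set ts))"
            by (rule combine) (use F2toL ab in auto)
          then obtain ts where "set ts \<subseteq> Tsq L" "a \<in> gen_field (L \<union> set ts)" "b \<in> gen_field (L \<union> set ts)"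
            by auto
          then show "\<exists>ts. set ts \<subseteq> Tsq L \<and> r \<in> qset (gen_field (L \<union> set ts)) w"
            using ab(3) unfolding qset_def by blast
        qed
      qed (use qset_mono in blast)+
      then obtain ts2 where ts2: "set ts2 \<subseteq> Tsq L" "\<forall>r\<in>set rs. r \<in> qset (gen_field (L \<union> set ts2)) w"
        by blast
      define ts where "ts = ts1 @ ts2"
      define A where "A = gen_field (L \<union> set ts)"
      have sA: "subfield A" unfolding A_def by (rule subfield_gen_field)
      have A1: "gen_field (L \<union> set ts1) \<subseteq> A" unfolding A_def ts_def by (intro gen_field_mono) auto
      have A2: "gen_field (L \<union> set ts2) \<subseteq> A" unfolding A_def ts_def by (intro gen_field_mono) auto
      have tsT: "set ts \<subseteq> Tsq L" unfolding ts_def using ts1(1) ts2(1) by simp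
      have uvc: "u \<in> A" "v \<in> A" "c \<in> A" using ts1 A1 by auto
      have rsA: "set rs \<subseteq> qset A w" using ts2(2) qset_mono[OF A2] by blast
      have AL2: "A \<subseteq> L2" unfolding A_def using tsT TL2 LL2 by (intro gen_field_least[OF sL2]) blast
      have wA: "w \<notin> A" using AL2 False by blast
      have LA: "L \<subseteq> A" unfolding A_def using gen_field_sub by blast
      define zs where "zs = ts @ [w]"
      have lz: "length zs = Suc (length ts)" unfolding zs_def by simp
      have Ntop: "tw L zs (length zs) = gen_field (A \<union> {w})"
        unfolding tw_def A_def zs_def using gen_field_nest[of "L \<union> set ts" "{w}"] by (simp add: Un_assoc)
      have NQ: "tw L zs (length zs) = qset A w"
        unfolding Ntop using quad_gen[OF sA uvc(3)[unfolded c_def] wA] .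
      have twA: "tw L zs (length ts) = A" unfolding tw_def A_def zs_def by simp
      have g: "good L zs"
        unfolding good_def
      proof (intro allI impI)
        fix i assume i: "i < length zs"
        let ?N = "tw L zs (length zs)"
        show "zs ! i * zs ! i \<in> tw L zs i \<and> (\<forall>\<sigma>. homfix L (tw L zs i) ?N \<sigma> \<longrightarrow> (\<exists>z'\<in>?N. z' * z' = \<sigma> (zs ! i * zs ! i)))"
        proof (cases "i < length ts")
          case True
          have zi: "zs ! i = ts ! i" unfolding zs_def using True by (simp add: nth_append)
          have tT: "ts ! i * ts ! i \<in> L" using tsT True nth_mem unfolding Tsq_def by blast
          have tN: "ts ! i \<in> ?N"
            using True nth_mem[OF True] gen_field_sub unfolding tw_def zs_def by fastforce
          show ?thesis
          proof (intro conjI allI impI)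
            show "zs ! i * zs ! i \<in> tw L zs i" using zi tT tw_K[of L zs i] by (simp add: subset_iff)
            fix \<sigma> assume h: "homfix L (tw L zs i) ?N \<sigma>"
            have "\<sigma> (zs ! i * zs ! i) = zs ! i * zs ! i" using hf_fix[OF h tw_subfield] zi tT by simp
            then show "\<exists>z'\<in>?N. z' * z' = \<sigma> (zs ! i * zs ! i)" using tN zi by metis
          qed
        next
          case False
          then have ii: "i = length ts" using i lz by simp
          have zi: "zs ! i = w" unfolding zs_def ii by simp
          have twi: "tw L zs i = A" using twA ii by simp
          show ?thesis
          proof (intro conjI allI impI)
            show "zs ! i * zs ! i \<in> tw L zs i" using zi twi uvc(3) unfolding c_def by simp
            fix \<sigma> assume h: "homfix L (tw L zs i) ?N \<sigma>"
            then have h': "homfix L A UNIV \<sigma>" using twi hf_codom[OF h tw_subfield] by simp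
            obtain w' where w': "w' * w' = \<sigma> (w * w)" using qc by blast
            obtain \<sigma>' where s': "homfix L (gen_field (A \<union> {w})) UNIV \<sigma>'" "\<sigma>' w = w'"
              using ext_hom[OF sA subfield_UNIV LA h' uvc(3)[unfolded c_def] wA _ w'] by blast
            have wB: "w \<in> gen_field (A \<union> {w})" using gen_field_sub by blast
            have LB: "L \<subseteq> gen_field (A \<union> {w})" using LA gen_field_sub by blast
            have "poly p w' = \<sigma>' (poly p w)"
              using hom_poly[OF s'(1) subfield_gen_field LB wB pL] s'(2) by simp
            also have "\<dots> = 0" using p(2) hf_zero[OF s'(1) subfield_gen_field] by simp
            finally have "poly p w' = 0" .
            then have "poly (\<Prod>r\<leftarrow>rs. [:- r, 1:]) w' = 0" using rs(2) lc by (metis poly_smult mult_eq_0_iff)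
            then have "w' \<in> set rs" by (rule poly_prod_root)
            then have "w' \<in> ?N" using rsA NQ by blast
            then show "\<exists>z'\<in>?N. z' * z' = \<sigma> (zs ! i * zs ! i)" using w' zi by metis
          qed
        qed
      qed
      have xN: "x \<in> tw L zs (length zs)" unfolding NQ qset_def using x(3) uvc by blast
      obtain Os where Os: "finite Os" "Os \<subseteq> tw L zs (length zs)" "x \<in> Os" "poly_over L (\<Prod>y\<in>Os. [:- y, 1:])"
        using core[OF L two g xN] by blast
      have "tw L zs (length zs) \<subseteq> M" unfolding Ntop M_def using AL2 by (intro gen_field_mono) blast
      then show "\<exists>Os. finite Os \<and> Os \<subseteq> M \<and> x \<in> Os \<and> poly_over L (\<Prod>y\<in>Os. [:- y, 1:])"
        using Os by blast
    qed
    then have "M \<in> {E. quadratic_ext L2 E \<and> galois_over L E}" using qM by simp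
    then have "M \<subseteq> L2 \<union> \<Union>{E. quadratic_ext L2 E \<and> galois_over L E}" by blast
    then have "M \<subseteq> quad_step L L2" unfolding quad_step_def using gen_field_sub by (rule order_trans)
    moreover have "E \<subseteq> M" using w(4) qset_mono[OF F2L2'] MQ by (metis order_trans)
    ultimately show ?thesis unfolding L2_def by (rule order_trans[rotated])
  qed
qed



theorem lemma2:
  fixes F :: "'a::field set" and a s :: 'a
  assumes "subfield F"
    and "(1::'a) + 1 \<noteq> 0"
    and "is_quadratic_closure_of F"
    and "a \<in> F" and "a \<noteq> 0" and "\<not> (\<exists>b\<in>F. b * b = a)"
    and "s * s = a"
  shows "kup F 3 \<subseteq> kup (gen_field (F \<union> {s})) 3"
proof -
  have F: "subfield F" using assms(1) .
  have two: "(1::'a) + 1 \<noteq> 0" using assms(2) .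
  have qc: "\<forall>x::'a. \<exists>y. y * y = x" using assms(3) unfolding is_quadratic_closure_of_def by blast
  define L where "L = gen_field (F \<union> {s})"
  have L: "subfield L" unfolding L_def by (rule subfield_gen_field)
  have FL: "F \<subseteq> L" unfolding L_def using gen_field_sub by blast
  have k3: "kup K 3 = quad_step K (quad_step K K)" for K :: "'a set"
    by (simp add: numeral_3_eq_3)
  have sL2: "subfield (quad_step L L)" by (rule quad_step_subfield)
  have LL2: "L \<subseteq> quad_step L L" by (rule quad_step_sub)
  have F2L2: "quad_step F F \<subseteq> quad_step L L"
    unfolding quad_step_def[of F F]
  proof (rule gen_field_least[OF sL2], rule Un_least)
    show "F \<subseteq> quad_step L L" using FL LL2 by (rule order_trans)
    show "\<Union>{E. quadratic_ext F E \<and> galois_over F E} \<subseteq> quad_step L L"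
    proof (rule Union_least)
      fix E assume "E \<in> {E. quadratic_ext F E \<and> galois_over F E}"
      then obtain t where t: "t * t \<in> F" "E \<subseteq> qset F t"
        using quad_ext_struct[OF F two] by blast
      have "t \<in> quad_step L L" using L2_has_sqrt[OF L two] t(1) FL by blast
      then have "qset F t \<subseteq> quad_step L L" using qset_closed[OF sL2] FL LL2 by blast
      then show "E \<subseteq> quad_step L L" using t(2) by (rule order_trans[rotated])
    qed
  qed
  have "quad_step F (quad_step F F) \<subseteq> quad_step L (quad_step L L)"
    unfolding quad_step_def[of F "quad_step F F"]
  proof (rule gen_field_least[OF quad_step_subfield], rule Un_least)
    show "quad_step F F \<subseteq> quad_step L (quad_step L L)" using F2L2 quad_step_sub by (rule order_trans)
    show "\<Union>{E. quadratic_ext (quad_step F F) E \<and> galois_over F E} \<subseteq> quad_step L (quad_step L L)"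
    proof (rule Union_least)
      fix E assume "E \<in> {E. quadratic_ext (quad_step F F) E \<and> galois_over F E}"
      then show "E \<subseteq> quad_step L (quad_step L L)" using key[OF F L FL two qc F2L2] by blast
    qed
  qed
  then show ?thesis unfolding k3 L_def .
qed

end
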